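(* Let $0\to C\to B\to A\to 0$ be a short exact sequence of abelian groups, with the groups and the maps definable in some structure. Assume that $C$ is finite, and that, for $n$ the exponent of $C$, the group $A/nA$ is finite and the $n$-torsion subgroup $A[n]$ of $A$ is finite. Then there is a definable group homomorphism $A\to B$ with finite kernel and with image of finite index in $B$. *)

theory Defs
  imports "HOL-Algebra.Algebra"
begin

definition tuples :: "nat \<Rightarrow> 'm list set" where
  "tuples n = {x. length x = n}"

text \<open>A first-order structure on the universe 'm, presented (following van den Dries)
  by its families of definable sets (with parameters): S n is the collection of
  definable subsets of M^n.\<close>
definition structure_on :: "(nat \<Rightarrow> 'm list set set) \<Rightarrow> bool" where
  "structure_on S \<longleftrightarrow>
     (\<forall>n. S n \<subseteq> Pow (tuples n)) \<and>
     (\<forall>n. {} \<in> S n) \<and>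
     (\<forall>n A B. A \<in> S n \<longrightarrow> B \<in> S n \<longrightarrow> A \<union> B \<in> S n) \<and>
     (\<forall>n A. A \<in> S n \<longrightarrow> tuples n - A \<in> S n) \<and>
     (\<forall>n A. A \<in> S n \<longrightarrow> {x @ [y] | x y. x \<in> A} \<in> S (Suc n)
                        \<and> {y # x | x y. x \<in> A} \<in> S (Suc n)) \<and>
     (\<forall>n i j. i < n \<longrightarrow> j < n \<longrightarrow> {x \<in> tuples n. x ! i = x ! j} \<in> S n) \<and>
     (\<forall>n A. A \<in> S (Suc n) \<longrightarrow> butlast ` A \<in> S n) \<and>
     (\<forall>a. {[a]} \<in> S 1)"

definition definable_group ::
  "(nat \<Rightarrow> 'm list set set) \<Rightarrow> nat \<Rightarrow> ('m list, 'b) monoid_scheme \<Rightarrow> bool" where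
  "definable_group S k G \<longleftrightarrow>
     carrier G \<subseteq> tuples k \<and> carrier G \<in> S k \<and>
     {x @ y @ z | x y z. x \<in> carrier G \<and> y \<in> carrier G \<and> z = x \<otimes>\<^bsub>G\<^esub> y} \<in> S (3 * k)"

definition definable_map ::
  "(nat \<Rightarrow> 'm list set set) \<Rightarrow> nat \<Rightarrow> nat \<Rightarrow> ('m list, 'b) monoid_scheme
     \<Rightarrow> ('m list \<Rightarrow> 'm list) \<Rightarrow> bool" where
  "definable_map S k l G f \<longleftrightarrow>
     {x @ y | x y. x \<in> carrier G \<and> y = f x} \<in> S (k + l)"

definition group_exponent :: "('a, 'b) monoid_scheme \<Rightarrow> nat" where
  "group_exponent G = (LEAST n. 0 < n \<and> (\<forall>x \<in> carrier G. x [^]\<^bsub>G\<^esub> n = \<one>\<^bsub>G\<^esub>))"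

text \<open>nA (multiplicative notation: n-th powers) and the n-torsion A[n].\<close>
definition mult_subgroup :: "('a, 'b) monoid_scheme \<Rightarrow> nat \<Rightarrow> 'a set" where
  "mult_subgroup G n = (\<lambda>x. x [^]\<^bsub>G\<^esub> n) ` carrier G"

definition torsion_subgroup :: "('a, 'b) monoid_scheme \<Rightarrow> nat \<Rightarrow> 'a set" where
  "torsion_subgroup G n = {x \<in> carrier G. x [^]\<^bsub>G\<^esub> n = \<one>\<^bsub>G\<^esub>}"

end

theory Submission
  imports Defs "HOL-Algebra.Multiplicative_Group"
begin


lemma so_D1: assumes "structure_on S" shows "\<forall>n. S n \<subseteq> Pow (tuples n)"
  using assms unfolding structure_on_def by (elim conjE) assumption
lemma so_D2: assumes "structure_on S" shows "\<forall>n. {} \<in> S n"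
  using assms unfolding structure_on_def by (elim conjE) assumption
lemma so_D3: assumes "structure_on S" shows "\<forall>n A B. A \<in> S n \<longrightarrow> B \<in> S n \<longrightarrow> A \<union> B \<in> S n"
  using assms unfolding structure_on_def by (elim conjE) assumption
lemma so_D4: assumes "structure_on S" shows "\<forall>n A. A \<in> S n \<longrightarrow> tuples n - A \<in> S n"
  using assms unfolding structure_on_def by (elim conjE) assumption
lemma so_D5: assumes "structure_on S" shows "\<forall>n A. A \<in> S n \<longrightarrow> {x @ [y] | x y. x \<in> A} \<in> S (Suc n) \<and> {y # x | x y. x \<in> A} \<in> S (Suc n)"
  using assms unfolding structure_on_def by (elim conjE) assumption
lemma so_D6: assumes "structure_on S" shows "\<forall>n i j. i < n \<longrightarrow> j < n \<longrightarrow> {x \<in> tuples n. x ! i = x ! j} \<in> S n"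
  using assms unfolding structure_on_def by (elim conjE) assumption
lemma so_D7: assumes "structure_on S" shows "\<forall>n A. A \<in> S (Suc n) \<longrightarrow> butlast ` A \<in> S n"
  using assms unfolding structure_on_def by (elim conjE) assumption

lemma so_sub: "structure_on S \<Longrightarrow> A \<in> S n \<Longrightarrow> A \<subseteq> tuples n"
  using so_D1 by blast
lemma so_compl: "structure_on S \<Longrightarrow> A \<in> S n \<Longrightarrow> tuples n - A \<in> S n"
  using so_D4 by blast
lemma so_emp: "structure_on S \<Longrightarrow> {} \<in> S n"
  using so_D2 by blast
lemma so_un: "structure_on S \<Longrightarrow> A \<in> S n \<Longrightarrow> B \<in> S n \<Longrightarrow> A \<union> B \<in> S n"
  using so_D3 by blast
lemma so_butlast: "structure_on S \<Longrightarrow> A \<in> S (Suc n) \<Longrightarrow> butlast ` A \<in> S n"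
  using so_D7 by blast
lemma so_front: "structure_on S \<Longrightarrow> A \<in> S n \<Longrightarrow> {y # x | x y. x \<in> A} \<in> S (Suc n)"
  using so_D5 by blast
lemma so_diag: "structure_on S \<Longrightarrow> i < n \<Longrightarrow> j < n \<Longrightarrow> {x \<in> tuples n. x ! i = x ! j} \<in> S n"
  using so_D6 by blast
lemma so_tuples: assumes "structure_on S" shows "tuples n \<in> S n"
  using so_compl[OF assms so_emp[OF assms]] by simp
lemma so_int: assumes "structure_on S" "A \<in> S n" "B \<in> S n" shows "A \<inter> B \<in> S n"
proof -
  have "A \<inter> B = tuples n - ((tuples n - A) \<union> (tuples n - B))"
    using so_sub[OF assms(1,2)] by blast
  then show ?thesis using so_compl[OF assms(1)] so_un[OF assms(1)] assms by simp
qed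

lemma so_prefix: assumes "structure_on S" "A \<in> S n"
  shows "{w \<in> tuples (m+n). drop m w \<in> A} \<in> S (m+n)"
proof (induction m)
  case 0
  have "{w \<in> tuples (0+n). drop 0 w \<in> A} = A" using so_sub[OF assms] by auto
  then show ?case using assms by simp
next
  case (Suc m)
  have "{w \<in> tuples (Suc m+n). drop (Suc m) w \<in> A} = {y # x | x y. x \<in> {w \<in> tuples (m+n). drop m w \<in> A}}"
  proof (intro Set.set_eqI iffI)
    fix w assume "w \<in> {w \<in> tuples (Suc m+n). drop (Suc m) w \<in> A}"
    then obtain y x where "w = y # x" "length x = m + n" "drop m x \<in> A"
      by (cases w) (auto simp: tuples_def)
    then show "w \<in> {y # x | x y. x \<in> {w \<in> tuples (m+n). drop m w \<in> A}}" by (auto simp: tuples_def)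
  next
    fix w assume "w \<in> {y # x | x y. x \<in> {w \<in> tuples (m+n). drop m w \<in> A}}"
    then show "w \<in> {w \<in> tuples (Suc m+n). drop (Suc m) w \<in> A}" by (auto simp: tuples_def)
  qed
  moreover have "{y # x | x y. x \<in> {w \<in> tuples (m+n). drop m w \<in> A}} \<in> S (Suc (m+n))"
    using so_front[OF assms(1) Suc] by simp
  ultimately show ?case by (simp only: add_Suc)
qed

lemma so_proj: assumes "structure_on S" "A \<in> S (m+k)"
  shows "{y. \<exists>z. length z = k \<and> y @ z \<in> A} \<in> S m"
  using assms(2)
proof (induction k arbitrary: A)
  case 0
  then show ?case by simp
next
  case (Suc k)
  have B: "butlast ` A \<in> S (m+k)" using so_butlast[OF assms(1)] Suc.prems by simp
  have len: "\<And>v. v \<in> A \<Longrightarrow> length v = m + Suc k" using so_sub[OF assms(1) Suc.prems] by (auto simp: tuples_def)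
  have "{y. \<exists>z. length z = k \<and> y @ z \<in> butlast ` A} = {y. \<exists>z. length z = Suc k \<and> y @ z \<in> A}"
  proof (rule Set.set_eqI, rule iffI)
    fix y assume "y \<in> {y. \<exists>z. length z = k \<and> y @ z \<in> butlast ` A}"
    then obtain z v where v: "length z = k" "v \<in> A" "y @ z = butlast v" by auto
    have "v \<noteq> []" using len[OF v(2)] by auto
    then have "y @ (z @ [last v]) = v" using v by (metis append_assoc append_butlast_last_id)
    then have "y @ (z @ [last v]) \<in> A" using v(2) by simp
    moreover have "length (z @ [last v]) = Suc k" using v(1) by simp
    ultimately show "y \<in> {y. \<exists>z. length z = Suc k \<and> y @ z \<in> A}" by blast
  next
    fix y assume "y \<in> {y. \<exists>z. length z = Suc k \<and> y @ z \<in> A}"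
    then obtain z where z: "length z = Suc k" "y @ z \<in> A" by auto
    then have "z \<noteq> []" by auto
    then have "butlast (y @ z) = y @ butlast z" by (simp add: butlast_append)
    then show "y \<in> {y. \<exists>z. length z = k \<and> y @ z \<in> butlast ` A}" using z
      by (intro CollectI exI[of _ "butlast z"]) (auto intro!: image_eqI[of _ _ "y @ z"])
  qed
  then show ?case using Suc.IH[OF B] by simp
qed

lemma so_diags: assumes "structure_on S" "\<forall>i<n. \<sigma> i < m" "n' \<le> n"
  shows "{w \<in> tuples (m+n). \<forall>i<n'. w!(m+i) = w!\<sigma> i} \<in> S (m+n)"
  using assms(3)
proof (induction n')
  case 0
  then show ?case using so_tuples[OF assms(1)] by simp
next
  case (Suc n')
  have D: "{x \<in> tuples (m+n). x ! (m+n') = x ! \<sigma> n'} \<in> S (m+n)"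
  proof -
    have "m + n' < m + n" "\<sigma> n' < m + n" using Suc.prems assms(2) by (auto simp: Suc_le_eq intro: trans_less_add1)
    then show ?thesis using so_diag[OF assms(1)] by blast
  qed
  have eq: "{w \<in> tuples (m+n). \<forall>i<Suc n'. w!(m+i) = w!\<sigma> i} =
        {w \<in> tuples (m+n). \<forall>i<n'. w!(m+i) = w!\<sigma> i} \<inter> {x \<in> tuples (m+n). x ! (m+n') = x ! \<sigma> n'}"
    using less_Suc_eq by auto
  have X: "{w \<in> tuples (m+n). \<forall>i<n'. w!(m+i) = w!\<sigma> i} \<in> S (m+n)" using Suc by simp
  show ?case by (subst eq) (rule so_int[OF assms(1) X D])
qed

lemma so_preimage: assumes "structure_on S" "A \<in> S n" "\<forall>i<n. \<sigma> i < m"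
  shows "{y \<in> tuples m. map (\<lambda>i. y ! \<sigma> i) [0..<n] \<in> A} \<in> S m"
proof -
  let ?E = "{w \<in> tuples (m+n). drop m w \<in> A} \<inter> {w \<in> tuples (m+n). \<forall>i<n. w!(m+i) = w!\<sigma> i}"
  have E: "?E \<in> S (m+n)" using so_int[OF assms(1) so_prefix[OF assms(1,2)] so_diags[OF assms(1,3) order_refl]] .
  have "{y. \<exists>z. length z = n \<and> y @ z \<in> ?E} = {y \<in> tuples m. map (\<lambda>i. y ! \<sigma> i) [0..<n] \<in> A}"
  proof (rule Set.set_eqI, rule iffI)
    fix y assume "y \<in> {y. \<exists>z. length z = n \<and> y @ z \<in> ?E}"
    then obtain z where h: "length z = n" "y @ z \<in> tuples (m + n)" "drop m (y @ z) \<in> A"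
      "\<forall>i<n. (y @ z) ! (m + i) = (y @ z) ! \<sigma> i" by auto
    have ly: "length y = m" using h by (simp add: tuples_def)
    have "map (\<lambda>i. y ! \<sigma> i) [0..<n] = z"
      using h ly assms(3) by (intro nth_equalityI) (auto simp: nth_append)
    then show "y \<in> {y \<in> tuples m. map (\<lambda>i. y ! \<sigma> i) [0..<n] \<in> A}" using h ly by (simp add: tuples_def)
  next
    fix y assume "y \<in> {y \<in> tuples m. map (\<lambda>i. y ! \<sigma> i) [0..<n] \<in> A}"
    then have h: "y \<in> tuples m" "map (\<lambda>i. y ! \<sigma> i) [0..<n] \<in> A" by auto
    then have ly: "length y = m" by (simp add: tuples_def)
    have "y @ map (\<lambda>i. y ! \<sigma> i) [0..<n] \<in> ?E"
      using h ly assms(3) by (auto simp: tuples_def nth_append)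
    then show "y \<in> {y. \<exists>z. length z = n \<and> y @ z \<in> ?E}" by (intro CollectI exI[of _ "map (\<lambda>i. y ! \<sigma> i) [0..<n]"]) simp
  qed
  then show ?thesis using so_proj[OF assms(1) E] by simp
qed



lemma map_idx: "length L = n \<Longrightarrow> (\<And>i. i<n \<Longrightarrow> w ! \<sigma> i = L ! i) \<Longrightarrow> map (\<lambda>i. w!\<sigma> i) [0..<n] = L"
  by (intro nth_equalityI) auto

lemma split2: assumes "length w = p + q"
  obtains x y where "w = x @ y" "length x = p" "length y = q"
  using assms by (intro that[of "take p w" "drop p w"]) auto

lemma app3_eq: "length x = k \<Longrightarrow> length y = k \<Longrightarrow> length x' = k \<Longrightarrow> length y' = k \<Longrightarrow>
   (x @ y @ z = x' @ y' @ z') \<longleftrightarrow> x = x' \<and> y = y' \<and> z = z'"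
  by auto

lemma memM: assumes "definable_group S k G" "length u = k" "length v = k" "length w = k"
  shows "u @ v @ w \<in> {x @ y @ z | x y z. x \<in> carrier G \<and> y \<in> carrier G \<and> z = x \<otimes>\<^bsub>G\<^esub> y}
    \<longleftrightarrow> u \<in> carrier G \<and> v \<in> carrier G \<and> w = u \<otimes>\<^bsub>G\<^esub> v" (is "?l \<longleftrightarrow> ?r")
proof
  have len: "\<And>x. x \<in> carrier G \<Longrightarrow> length x = k" using assms(1) by (auto simp: definable_group_def tuples_def)
  assume ?l
  then obtain x y z where h: "u @ v @ w = x @ y @ z" "x \<in> carrier G" "y \<in> carrier G" "z = x \<otimes>\<^bsub>G\<^esub> y" by blast
  have "u = x \<and> v = y \<and> w = z" using app3_eq[OF assms(2,3) len[OF h(2)] len[OF h(3)]] h(1) by blast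
  then show ?r using h by blast
next
  assume ?r then show ?l by blast
qed

lemma memG2: assumes "\<And>x. x \<in> XS \<Longrightarrow> length x = k" "length u = k"
  shows "u @ v \<in> {x @ y | x y. x \<in> XS \<and> y = h x} \<longleftrightarrow> u \<in> XS \<and> v = h u"
proof
  assume "u @ v \<in> {x @ y | x y. x \<in> XS \<and> y = h x}"
  then obtain x y where h: "u @ v = x @ y" "x \<in> XS" "y = h x" by blast
  then have "u = x \<and> v = y" using assms(1)[OF h(2)] assms(2) by simp
  then show "u \<in> XS \<and> v = h u" using h by blast
next
  assume "u \<in> XS \<and> v = h u" then show "u @ v \<in> {x @ y | x y. x \<in> XS \<and> y = h x}" by blast
qed

lemma pow_graph:
  assumes struct: "structure_on S" and dB: "definable_group S k B" and gB: "group B"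
  shows "{x @ y | x y. x \<in> carrier B \<and> y = x [^]\<^bsub>B\<^esub> (m::nat)} \<in> S (k+k)"
proof -
  let ?M = "{x @ y @ z | x y z. x \<in> carrier B \<and> y \<in> carrier B \<and> z = x \<otimes>\<^bsub>B\<^esub> y}"
  have M: "?M \<in> S (3*k)" and CB: "carrier B \<in> S k" using dB by (auto simp: definable_group_def)
  have len: "\<And>x. x \<in> carrier B \<Longrightarrow> length x = k" using dB by (auto simp: definable_group_def tuples_def)
  show ?thesis
  proof (induction m)
    case 0
    let ?s1 = "\<lambda>i::nat. i"
    let ?s2 = "\<lambda>i::nat. k + (if i < k then i else if i < k + k then i - k else i - (k+k))"
    have A1: "{w \<in> tuples (k+k). map (\<lambda>i. w ! ?s1 i) [0..<k] \<in> carrier B} \<in> S (k+k)"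
      by (rule so_preimage[OF struct CB]) auto
    have A2: "{w \<in> tuples (k+k). map (\<lambda>i. w ! ?s2 i) [0..<3*k] \<in> ?M} \<in> S (k+k)"
      by (rule so_preimage[OF struct M]) auto
    have "{w \<in> tuples (k+k). map (\<lambda>i. w ! ?s1 i) [0..<k] \<in> carrier B} \<inter>
          {w \<in> tuples (k+k). map (\<lambda>i. w ! ?s2 i) [0..<3*k] \<in> ?M}
        = {x @ y | x y. x \<in> carrier B \<and> y = x [^]\<^bsub>B\<^esub> (0::nat)}" (is "?L = ?R")
    proof (rule Set.set_eqI)
      fix w
      show "w \<in> ?L \<longleftrightarrow> w \<in> ?R"
      proof (cases "length w = k + k")
        case True
        then obtain x y where w: "w = x @ y" "length x = k" "length y = k" by (rule split2)
        have e1: "map (\<lambda>i. w ! ?s1 i) [0..<k] = x"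
          by (rule map_idx) (auto simp: w nth_append)
        have e2: "map (\<lambda>i. w ! ?s2 i) [0..<3*k] = y @ y @ y"
          by (rule map_idx) (auto simp: w nth_append)
        have "w \<in> ?L \<longleftrightarrow> x \<in> carrier B \<and> y @ y @ y \<in> ?M"
          by (simp only: Int_iff mem_Collect_eq e1 e2 tuples_def True simp_thms)
        also have "\<dots> \<longleftrightarrow> x \<in> carrier B \<and> y \<in> carrier B \<and> y = y \<otimes>\<^bsub>B\<^esub> y"
          using memM[OF dB w(3) w(3) w(3)] by simp
        also have "\<dots> \<longleftrightarrow> x \<in> carrier B \<and> y = \<one>\<^bsub>B\<^esub>"
          using group.r_cancel_one[OF gB, of y y] monoid.one_closed[OF group.is_monoid[OF gB]] by (auto simp: eq_commute)
        also have "\<dots> \<longleftrightarrow> w \<in> ?R" using memG2[of "carrier B" k x y "\<lambda>_. \<one>\<^bsub>B\<^esub>", OF len w(2)] w by simp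
        finally show ?thesis .
      next
        case False
        then show ?thesis using len monoid.one_closed[OF group.is_monoid[OF gB]] monoid.nat_pow_closed[OF group.is_monoid[OF gB]] monoid.m_closed[OF group.is_monoid[OF gB]] by (auto simp: tuples_def)
      qed
    qed
    then show ?case using so_int[OF struct A1 A2] by simp
  next
    case (Suc m)
    let ?P = "{x @ y | x y. x \<in> carrier B \<and> y = x [^]\<^bsub>B\<^esub> m}"
    let ?s1 = "\<lambda>i::nat. if i < k then i else i + k"
    let ?s2 = "\<lambda>i::nat. if i < k then k + k + i else i - k"
    have A1: "{w \<in> tuples (k+k+k). map (\<lambda>i. w ! ?s1 i) [0..<k+k] \<in> ?P} \<in> S (k+k+k)"
      by (rule so_preimage[OF struct Suc]) auto
    have A2: "{w \<in> tuples (k+k+k). map (\<lambda>i. w ! ?s2 i) [0..<3*k] \<in> ?M} \<in> S (k+k+k)"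
      by (rule so_preimage[OF struct M]) auto
    let ?T = "{w \<in> tuples (k+k+k). map (\<lambda>i. w ! ?s1 i) [0..<k+k] \<in> ?P} \<inter>
          {w \<in> tuples (k+k+k). map (\<lambda>i. w ! ?s2 i) [0..<3*k] \<in> ?M}"
    have T: "?T \<in> S ((k+k)+k)" using so_int[OF struct A1 A2] by simp
    have "{u. \<exists>z. length z = k \<and> u @ z \<in> ?T} = {x @ y | x y. x \<in> carrier B \<and> y = x [^]\<^bsub>B\<^esub> Suc m}"
      (is "?L = ?R")
    proof (rule Set.set_eqI)
      fix u
      show "u \<in> ?L \<longleftrightarrow> u \<in> ?R"
      proof (cases "length u = k + k")
        case True
        then obtain x y where u: "u = x @ y" "length x = k" "length y = k" by (rule split2)
        have zz: "u @ z \<in> ?T \<longleftrightarrow> x \<in> carrier B \<and> z = x [^]\<^bsub>B\<^esub> m \<and> y = z \<otimes>\<^bsub>B\<^esub> x" if z: "length z = k" for z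
        proof -
          have e1: "map (\<lambda>i. (u@z) ! ?s1 i) [0..<k+k] = x @ z"
            by (rule map_idx) (auto simp: u z nth_append)
          have e2: "map (\<lambda>i. (u@z) ! ?s2 i) [0..<3*k] = z @ x @ y"
            by (rule map_idx) (auto simp: u z nth_append)
          have lenu: "length (u@z) = k+k+k" using u z by simp
          have "u @ z \<in> ?T \<longleftrightarrow> x @ z \<in> ?P \<and> z @ x @ y \<in> ?M"
            by (simp only: Int_iff mem_Collect_eq e1 e2 tuples_def lenu simp_thms)
          also have "\<dots> \<longleftrightarrow> (x \<in> carrier B \<and> z = x [^]\<^bsub>B\<^esub> m) \<and> (z \<in> carrier B \<and> x \<in> carrier B \<and> y = z \<otimes>\<^bsub>B\<^esub> x)"
            using memM[OF dB z u(2) u(3)] memG2[of "carrier B" k x z, OF len u(2)] by simp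
          also have "\<dots> \<longleftrightarrow> x \<in> carrier B \<and> z = x [^]\<^bsub>B\<^esub> m \<and> y = z \<otimes>\<^bsub>B\<^esub> x"
            using monoid.nat_pow_closed[OF group.is_monoid[OF gB]] by blast
          finally show ?thesis .
        qed
        have "u \<in> ?L \<longleftrightarrow> (\<exists>z. length z = k \<and> u @ z \<in> ?T)" by (simp only: mem_Collect_eq)
        also have "\<dots> \<longleftrightarrow> (\<exists>z. length z = k \<and> x \<in> carrier B \<and> z = x [^]\<^bsub>B\<^esub> m \<and> y = z \<otimes>\<^bsub>B\<^esub> x)"
          using zz by blast
        also have "\<dots> \<longleftrightarrow> x \<in> carrier B \<and> y = x [^]\<^bsub>B\<^esub> m \<otimes>\<^bsub>B\<^esub> x"
          using len monoid.nat_pow_closed[OF group.is_monoid[OF gB]] by blast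
        also have "\<dots> \<longleftrightarrow> u \<in> ?R"
          using memG2[of "carrier B" k x y "\<lambda>x. x [^]\<^bsub>B\<^esub> Suc m", OF len u(2)] u
          by (simp add: monoid.nat_pow_Suc[OF group.is_monoid[OF gB]])
        finally show ?thesis .
      next
        case False
        then show ?thesis using len monoid.one_closed[OF group.is_monoid[OF gB]] monoid.nat_pow_closed[OF group.is_monoid[OF gB]] monoid.m_closed[OF group.is_monoid[OF gB]] by (auto simp: tuples_def)
      qed
    qed
    then show ?case using so_proj[OF struct T] by simp
  qed
qed



lemma graph_lift:
  assumes struct: "structure_on S" and dB: "definable_group S k B" and gB: "group B"
    and dA: "definable_group S kA A"
    and df: "definable_map S k kA B f"
    and fA: "\<And>b. b \<in> carrier B \<Longrightarrow> f b \<in> carrier A"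
    and surj: "\<And>a. a \<in> carrier A \<Longrightarrow> \<exists>b \<in> carrier B. f b = a"
    and hdef: "\<And>b. b \<in> carrier B \<Longrightarrow> h (f b) = b [^]\<^bsub>B\<^esub> (n::nat)"
  shows "{x @ y | x y. x \<in> carrier A \<and> y = h x} \<in> S (kA + k)"
proof -
  let ?F = "{x @ y | x y. x \<in> carrier B \<and> y = f x}"
  let ?P = "{x @ y | x y. x \<in> carrier B \<and> y = x [^]\<^bsub>B\<^esub> n}"
  have F: "?F \<in> S (k + kA)" using df by (simp add: definable_map_def)
  have P: "?P \<in> S (k + k)" by (rule pow_graph[OF struct dB gB])
  have len: "\<And>x. x \<in> carrier B \<Longrightarrow> length x = k" using dB by (auto simp: definable_group_def tuples_def)
  have lenA: "\<And>x. x \<in> carrier A \<Longrightarrow> length x = kA" using dA by (auto simp: definable_group_def tuples_def)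
  have pc: "\<And>x. x \<in> carrier B \<Longrightarrow> x [^]\<^bsub>B\<^esub> n \<in> carrier B"
    using monoid.nat_pow_closed[OF group.is_monoid[OF gB]] by blast
  let ?s1 = "\<lambda>i::nat. if i < k then kA + k + i else i - k"
  let ?s2 = "\<lambda>i::nat. if i < k then kA + k + i else kA + (i - k)"
  have A1: "{w \<in> tuples (kA+k+k). map (\<lambda>i. w ! ?s1 i) [0..<k+kA] \<in> ?F} \<in> S (kA+k+k)"
    by (rule so_preimage[OF struct F]) auto
  have A2: "{w \<in> tuples (kA+k+k). map (\<lambda>i. w ! ?s2 i) [0..<k+k] \<in> ?P} \<in> S (kA+k+k)"
    by (rule so_preimage[OF struct P]) auto
  let ?T = "{w \<in> tuples (kA+k+k). map (\<lambda>i. w ! ?s1 i) [0..<k+kA] \<in> ?F} \<inter>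
      {w \<in> tuples (kA+k+k). map (\<lambda>i. w ! ?s2 i) [0..<k+k] \<in> ?P}"
  have T: "?T \<in> S ((kA+k)+k)" using so_int[OF struct A1 A2] by simp
  have "{u. \<exists>z. length z = k \<and> u @ z \<in> ?T} = {x @ y | x y. x \<in> carrier A \<and> y = h x}"
    (is "?L = ?R")
  proof (rule Set.set_eqI)
    fix u
    show "u \<in> ?L \<longleftrightarrow> u \<in> ?R"
    proof (cases "length u = kA + k")
      case True
      then obtain a y where u: "u = a @ y" "length a = kA" "length y = k" by (rule split2)
      have zz: "u @ z \<in> ?T \<longleftrightarrow> z \<in> carrier B \<and> a = f z \<and> y = z [^]\<^bsub>B\<^esub> n" if z: "length z = k" for z
      proof -
        have e1: "map (\<lambda>i. (u@z) ! ?s1 i) [0..<k+kA] = z @ a"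
          by (rule map_idx) (auto simp: u z nth_append)
        have e2: "map (\<lambda>i. (u@z) ! ?s2 i) [0..<k+k] = z @ y"
          by (rule map_idx) (auto simp: u z nth_append)
        have lenu: "length (u@z) = kA+k+k" using u z by simp
        have "u @ z \<in> ?T \<longleftrightarrow> z @ a \<in> ?F \<and> z @ y \<in> ?P"
          by (simp only: Int_iff mem_Collect_eq e1 e2 tuples_def lenu simp_thms)
        also have "\<dots> \<longleftrightarrow> (z \<in> carrier B \<and> a = f z) \<and> (z \<in> carrier B \<and> y = z [^]\<^bsub>B\<^esub> n)"
          using memG2[of "carrier B" k z a f, OF len z] memG2[of "carrier B" k z y, OF len z] by simp
        finally show ?thesis by blast
      qed
      have "u \<in> ?L \<longleftrightarrow> (\<exists>z. length z = k \<and> u @ z \<in> ?T)" by (simp only: mem_Collect_eq)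
      also have "\<dots> \<longleftrightarrow> (\<exists>z. length z = k \<and> z \<in> carrier B \<and> a = f z \<and> y = z [^]\<^bsub>B\<^esub> n)"
        using zz by blast
      also have "\<dots> \<longleftrightarrow> a \<in> carrier A \<and> y = h a"
      proof
        assume "\<exists>z. length z = k \<and> z \<in> carrier B \<and> a = f z \<and> y = z [^]\<^bsub>B\<^esub> n"
        then obtain z where "z \<in> carrier B" "a = f z" "y = z [^]\<^bsub>B\<^esub> n" by blast
        then show "a \<in> carrier A \<and> y = h a" using fA hdef by simp
      next
        assume h1: "a \<in> carrier A \<and> y = h a"
        then obtain z where "z \<in> carrier B" "f z = a" using surj by blast
        then show "\<exists>z. length z = k \<and> z \<in> carrier B \<and> a = f z \<and> y = z [^]\<^bsub>B\<^esub> n"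
          using h1 hdef len by (intro exI[of _ z]) auto
      qed
      also have "\<dots> \<longleftrightarrow> u \<in> ?R" using memG2[of "carrier A" kA a y h, OF lenA u(2)] u by simp
      finally show ?thesis .
    next
      case False
      have "u \<notin> ?R"
      proof
        assume "u \<in> ?R"
        then obtain a where a: "a \<in> carrier A" "u = a @ h a" by blast
        then obtain z where "z \<in> carrier B" "f z = a" using surj by blast
        then have "length (h a) = k" using hdef len pc by metis
        then show False using False a lenA by simp
      qed
      moreover have "u \<notin> ?L" using False by (auto simp: tuples_def)
      ultimately show ?thesis by blast
    qed
  qed
  then show ?thesis using so_proj[OF struct T] by simp
qed



theorem lemma4p1:
  fixes S :: "nat \<Rightarrow> 'm list set set"
    and A B C :: "'m list monoid"
    and kA kB kC :: nat
    and g f :: "'m list \<Rightarrow> 'm list"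
  assumes struct: "structure_on S"
    and abA: "comm_group A" and abB: "comm_group B" and abC: "comm_group C"
    and dA: "definable_group S kA A" and dB: "definable_group S kB B"
    and dC: "definable_group S kC C"
    and g_hom: "g \<in> hom C B" and f_hom: "f \<in> hom B A"
    and dg: "definable_map S kC kB C g" and df: "definable_map S kB kA B f"
    and g_inj: "inj_on g (carrier C)"
    and exact: "g ` carrier C = kernel B A f"
    and f_surj: "f ` carrier B = carrier A"
    and finC: "finite (carrier C)"
    and fin_quot: "finite (rcosets\<^bsub>A\<^esub> (mult_subgroup A (group_exponent C)))"
    and fin_tors: "finite (torsion_subgroup A (group_exponent C))"
  shows "\<exists>h. h \<in> hom A B \<and> definable_map S kA kB A h
             \<and> finite (kernel A B h)
             \<and> finite (rcosets\<^bsub>B\<^esub> (h ` carrier A))"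
proof -
  interpret A: comm_group A by (rule abA)
  interpret B: comm_group B by (rule abB)
  interpret C: comm_group C by (rule abC)
  interpret F: group_hom B A f using f_hom by (simp add: group_hom_def group_hom_axioms_def A.group_axioms B.group_axioms)
  interpret G: group_hom C B g using g_hom by (simp add: group_hom_def group_hom_axioms_def C.group_axioms B.group_axioms)
  define n where "n = group_exponent C"
  have ex: "\<exists>m::nat. 0 < m \<and> (\<forall>x \<in> carrier C. x [^]\<^bsub>C\<^esub> m = \<one>\<^bsub>C\<^esub>)"
  proof -
    have "0 < order C" using finC C.order_gt_0_iff_finite by simp
    then show ?thesis by (intro HOL.exI[of _ "order C"]) (simp add: C.pow_order_eq_1)
  qed
  have L: "0 < n \<and> (\<forall>x \<in> carrier C. x [^]\<^bsub>C\<^esub> n = \<one>\<^bsub>C\<^esub>)"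
    unfolding n_def group_exponent_def by (rule LeastI_ex[OF ex])
  have nC: "\<And>x. x \<in> carrier C \<Longrightarrow> x [^]\<^bsub>C\<^esub> n = \<one>\<^bsub>C\<^esub>" using L by blast
  have kerpow: "x [^]\<^bsub>B\<^esub> n = \<one>\<^bsub>B\<^esub>" if "x \<in> kernel B A f" for x
  proof -
    have "x \<in> g ` carrier C" using that exact by simp
    then obtain c where c: "c \<in> carrier C" "x = g c" by (rule imageE) simp
    have "x [^]\<^bsub>B\<^esub> n = g (c [^]\<^bsub>C\<^esub> n)" using c G.hom_nat_pow by simp
    also have "\<dots> = \<one>\<^bsub>B\<^esub>" using nC[OF c(1)] by simp
    finally show ?thesis .
  qed
  have key: "b1 [^]\<^bsub>B\<^esub> n = b2 [^]\<^bsub>B\<^esub> n"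
    if b: "b1 \<in> carrier B" "b2 \<in> carrier B" "f b1 = f b2" for b1 b2
  proof -
    let ?x = "b1 \<otimes>\<^bsub>B\<^esub> inv\<^bsub>B\<^esub> b2"
    have "f ?x = \<one>\<^bsub>A\<^esub>" using b by simp
    then have "?x \<in> kernel B A f" using b by (simp add: kernel_def)
    then have "?x [^]\<^bsub>B\<^esub> n = \<one>\<^bsub>B\<^esub>" by (rule kerpow)
    then have "b1 [^]\<^bsub>B\<^esub> n \<otimes>\<^bsub>B\<^esub> inv\<^bsub>B\<^esub> (b2 [^]\<^bsub>B\<^esub> n) = \<one>\<^bsub>B\<^esub>"
      using b by (simp add: B.nat_pow_distrib B.nat_pow_inv)
    moreover have "b1 [^]\<^bsub>B\<^esub> n = (b1 [^]\<^bsub>B\<^esub> n \<otimes>\<^bsub>B\<^esub> inv\<^bsub>B\<^esub> (b2 [^]\<^bsub>B\<^esub> n)) \<otimes>\<^bsub>B\<^esub> b2 [^]\<^bsub>B\<^esub> n"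
      using b by (simp add: B.m_assoc)
    ultimately show ?thesis using b by simp
  qed
  define pre where "pre a = (SOME b. b \<in> carrier B \<and> f b = a)" for a
  have pre: "pre a \<in> carrier B \<and> f (pre a) = a" if "a \<in> carrier A" for a
  proof -
    have "a \<in> f ` carrier B" using that f_surj by simp
    then have "\<exists>b. b \<in> carrier B \<and> f b = a" by blast
    then show ?thesis unfolding pre_def by (rule someI_ex)
  qed
  define h where "h a = pre a [^]\<^bsub>B\<^esub> n" for a
  have hf: "h (f b) = b [^]\<^bsub>B\<^esub> n" if "b \<in> carrier B" for b
  proof -
    have "f b \<in> carrier A" using that by simp
    then have "pre (f b) \<in> carrier B" "f (pre (f b)) = f b" using pre by auto
    then show ?thesis unfolding h_def using key[of "pre (f b)" b] that by simp
  qed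
  have hB: "h a \<in> carrier B" if "a \<in> carrier A" for a
    using pre[OF that] unfolding h_def by simp
  have hhom: "h \<in> hom A B"
  proof (rule homI)
    fix a assume "a \<in> carrier A" then show "h a \<in> carrier B" by (rule hB)
  next
    fix a1 a2 assume a: "a1 \<in> carrier A" "a2 \<in> carrier A"
    have "h (a1 \<otimes>\<^bsub>A\<^esub> a2) = h (f (pre a1 \<otimes>\<^bsub>B\<^esub> pre a2))" using pre[OF a(1)] pre[OF a(2)] by simp
    also have "\<dots> = (pre a1 \<otimes>\<^bsub>B\<^esub> pre a2) [^]\<^bsub>B\<^esub> n" by (rule hf) (use pre[OF a(1)] pre[OF a(2)] in simp)
    also have "\<dots> = h a1 \<otimes>\<^bsub>B\<^esub> h a2" using pre[OF a(1)] pre[OF a(2)] by (simp add: B.nat_pow_distrib h_def)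
    finally show "h (a1 \<otimes>\<^bsub>A\<^esub> a2) = h a1 \<otimes>\<^bsub>B\<^esub> h a2" .
  qed
  have hdef: "definable_map S kA kB A h"
    unfolding definable_map_def
    by (rule graph_lift[OF struct dB B.group_axioms dA df]) (use pre hf in auto)
  have ker: "finite (kernel A B h)"
  proof (rule finite_subset[OF _ fin_tors])
    show "kernel A B h \<subseteq> torsion_subgroup A (group_exponent C)"
    proof
      fix a assume "a \<in> kernel A B h"
      then have a: "a \<in> carrier A" "h a = \<one>\<^bsub>B\<^esub>" by (auto simp: kernel_def)
      have "a [^]\<^bsub>A\<^esub> n = f (pre a [^]\<^bsub>B\<^esub> n)" using pre[OF a(1)] F.hom_nat_pow by simp
      also have "\<dots> = \<one>\<^bsub>A\<^esub>" using a(2) by (simp add: h_def)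
      finally show "a \<in> torsion_subgroup A (group_exponent C)"
        using a by (simp add: torsion_subgroup_def n_def)
    qed
  qed
  have img: "h ` carrier A = mult_subgroup B n"
  proof
    show "h ` carrier A \<subseteq> mult_subgroup B n"
    proof
      fix y assume "y \<in> h ` carrier A"
      then obtain a where a: "a \<in> carrier A" "y = h a" by blast
      then show "y \<in> mult_subgroup B n" using pre[OF a(1)] unfolding mult_subgroup_def h_def by (intro image_eqI[of _ _ "pre a"]) auto
    qed
    show "mult_subgroup B n \<subseteq> h ` carrier A"
    proof
      fix y assume "y \<in> mult_subgroup B n"
      then obtain x where x: "x \<in> carrier B" "y = x [^]\<^bsub>B\<^esub> n" unfolding mult_subgroup_def by blast
      then show "y \<in> h ` carrier A" using hf[OF x(1)] by (intro image_eqI[of _ _ "f x"]) auto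
    qed
  qed
  have sub: "subgroup (mult_subgroup B n) B"
  proof (rule B.subgroupI)
    show "mult_subgroup B n \<subseteq> carrier B" unfolding mult_subgroup_def by auto
    show "mult_subgroup B n \<noteq> {}" unfolding mult_subgroup_def by auto
    fix a assume "a \<in> mult_subgroup B n"
    then obtain x where x: "x \<in> carrier B" "a = x [^]\<^bsub>B\<^esub> n" unfolding mult_subgroup_def by blast
    then have "inv\<^bsub>B\<^esub> a = (inv\<^bsub>B\<^esub> x) [^]\<^bsub>B\<^esub> n" by (simp add: B.nat_pow_inv)
    then show "inv\<^bsub>B\<^esub> a \<in> mult_subgroup B n" using x unfolding mult_subgroup_def by blast
  next
    fix a b assume "a \<in> mult_subgroup B n" "b \<in> mult_subgroup B n"
    then obtain x y where x: "x \<in> carrier B" "a = x [^]\<^bsub>B\<^esub> n" "y \<in> carrier B" "b = y [^]\<^bsub>B\<^esub> n"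
      unfolding mult_subgroup_def by blast
    then have "a \<otimes>\<^bsub>B\<^esub> b = (x \<otimes>\<^bsub>B\<^esub> y) [^]\<^bsub>B\<^esub> n" by (simp add: B.nat_pow_distrib)
    then show "a \<otimes>\<^bsub>B\<^esub> b \<in> mult_subgroup B n" using x unfolding mult_subgroup_def by blast
  qed
  define RA where "RA = rcosets\<^bsub>A\<^esub> (mult_subgroup A n)"
  define TA where "TA = (\<lambda>XX. SOME t. t \<in> XX) ` RA"
  have finTA: "finite TA" using fin_quot unfolding TA_def RA_def n_def by simp
  have fact1: "\<exists>t\<in>TA. \<exists>y\<in>carrier A. t \<in> carrier A \<and> a = y [^]\<^bsub>A\<^esub> n \<otimes>\<^bsub>A\<^esub> t" if a: "a \<in> carrier A" for a
  proof -
    let ?XX = "mult_subgroup A n #>\<^bsub>A\<^esub> a"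
    have XR: "?XX \<in> RA" unfolding RA_def RCOSETS_def using a by blast
    have "\<one>\<^bsub>A\<^esub> \<otimes>\<^bsub>A\<^esub> a \<in> ?XX" unfolding r_coset_def mult_subgroup_def
      by (rule UN_I[of "\<one>\<^bsub>A\<^esub> [^]\<^bsub>A\<^esub> n"]) (auto intro: image_eqI[of _ _ "\<one>\<^bsub>A\<^esub>"])
    then have "(SOME t. t \<in> ?XX) \<in> ?XX" by (rule someI)
    then obtain x where x: "x \<in> carrier A" "(SOME t. t \<in> ?XX) = x [^]\<^bsub>A\<^esub> n \<otimes>\<^bsub>A\<^esub> a"
      unfolding r_coset_def mult_subgroup_def by blast
    let ?t = "SOME t. t \<in> ?XX"
    have tA: "?t \<in> carrier A" using x a by simp
    have "(inv\<^bsub>A\<^esub> x) [^]\<^bsub>A\<^esub> n \<otimes>\<^bsub>A\<^esub> ?t = a" using x a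
      by (simp add: A.nat_pow_inv A.m_assoc[symmetric])
    moreover have "?t \<in> TA" using XR unfolding TA_def by (rule imageI)
    moreover have "inv\<^bsub>A\<^esub> x \<in> carrier A" using x(1) by simp
    ultimately show ?thesis using tA by metis
  qed
  define RB where "RB = (\<lambda>(c, t). g c \<otimes>\<^bsub>B\<^esub> pre t) ` (carrier C \<times> TA)"
  have finRB: "finite RB" unfolding RB_def using finC finTA by simp
  have fact2: "\<exists>r\<in>RB. \<exists>x\<in>carrier B. r \<in> carrier B \<and> b = x [^]\<^bsub>B\<^esub> n \<otimes>\<^bsub>B\<^esub> r" if b: "b \<in> carrier B" for b
  proof -
    obtain t y where t: "t \<in> TA" "y \<in> carrier A" "t \<in> carrier A" "f b = y [^]\<^bsub>A\<^esub> n \<otimes>\<^bsub>A\<^esub> t"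
      using fact1[of "f b"] b by auto
    let ?x = "pre y" and ?s = "pre t"
    have xs: "?x \<in> carrier B" "?s \<in> carrier B" "f ?x = y" "f ?s = t" using pre t by auto
    have "f (b \<otimes>\<^bsub>B\<^esub> inv\<^bsub>B\<^esub> (?x [^]\<^bsub>B\<^esub> n \<otimes>\<^bsub>B\<^esub> ?s)) = \<one>\<^bsub>A\<^esub>"
      using xs b t by (simp add: F.hom_nat_pow)
    then have "b \<otimes>\<^bsub>B\<^esub> inv\<^bsub>B\<^esub> (?x [^]\<^bsub>B\<^esub> n \<otimes>\<^bsub>B\<^esub> ?s) \<in> g ` carrier C"
      using exact xs b by (simp add: kernel_def)
    then obtain c where c: "c \<in> carrier C" "g c = b \<otimes>\<^bsub>B\<^esub> inv\<^bsub>B\<^esub> (?x [^]\<^bsub>B\<^esub> n \<otimes>\<^bsub>B\<^esub> ?s)" by auto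
    have gc: "g c \<in> carrier B" using c(1) by simp
    have p: "?x [^]\<^bsub>B\<^esub> n \<otimes>\<^bsub>B\<^esub> ?s \<in> carrier B" using xs by simp
    have "?x [^]\<^bsub>B\<^esub> n \<otimes>\<^bsub>B\<^esub> (g c \<otimes>\<^bsub>B\<^esub> ?s) = g c \<otimes>\<^bsub>B\<^esub> (?x [^]\<^bsub>B\<^esub> n \<otimes>\<^bsub>B\<^esub> ?s)"
      using B.m_lcomm xs gc by simp
    also have "\<dots> = b" unfolding c(2) using b p by (simp add: B.m_assoc)
    finally have "b = ?x [^]\<^bsub>B\<^esub> n \<otimes>\<^bsub>B\<^esub> (g c \<otimes>\<^bsub>B\<^esub> ?s)" by simp
    moreover have "g c \<otimes>\<^bsub>B\<^esub> ?s \<in> RB" unfolding RB_def using c t by force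
    ultimately show ?thesis using xs gc by blast
  qed
  have cos: "finite (rcosets\<^bsub>B\<^esub> (mult_subgroup B n))"
  proof (rule finite_subset[OF _ finite_imageI[OF finRB]])
    show "rcosets\<^bsub>B\<^esub> (mult_subgroup B n) \<subseteq> (\<lambda>r. mult_subgroup B n #>\<^bsub>B\<^esub> r) ` RB"
    proof
      fix XX assume "XX \<in> rcosets\<^bsub>B\<^esub> (mult_subgroup B n)"
      then obtain b where b: "b \<in> carrier B" "XX = mult_subgroup B n #>\<^bsub>B\<^esub> b" unfolding RCOSETS_def by blast
      obtain r x where r: "r \<in> RB" "x \<in> carrier B" "r \<in> carrier B" "b = x [^]\<^bsub>B\<^esub> n \<otimes>\<^bsub>B\<^esub> r"
        using fact2[OF b(1)] by blast
      have "b \<in> mult_subgroup B n #>\<^bsub>B\<^esub> r" unfolding r_coset_def mult_subgroup_def using r by blast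
      then have "mult_subgroup B n #>\<^bsub>B\<^esub> r = mult_subgroup B n #>\<^bsub>B\<^esub> b"
        by (rule B.repr_independence[OF _ r(3) sub])
      then show "XX \<in> (\<lambda>r. mult_subgroup B n #>\<^bsub>B\<^esub> r) ` RB" using b r by auto
    qed
  qed
  show ?thesis using hhom hdef ker cos img by (intro HOL.exI[of _ h]) simp
qed

end
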